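(* Let $\mathcal{S}=\{S_1,\dots,S_N\}\subset\mathbb{R}^Q_{\ge 0}$ be a finite set of service vectors, let $\Delta$ be a $Q\times Q$ diagonal matrix with strictly positive diagonal entries, and consider the discrete-time parallel queueing system described in the context, operated under the MaxWeight policy with matrix $\Delta$, with arrivals having long-run rate vector $\rho$. Suppose the system is overloaded, i.e. $\rho\notin\mathcal{P}$. Then $$\lim_{t\to\infty}\frac{X(t)}{t}=\eta\neq 0,$$ that is, the workload grows along the same non-zero vector $\eta$ on every arrival trace (with rate vector $\rho$). Moreover, $\eta$ is the unique solution of the convex program $$\langle \eta,\Delta\eta\rangle=\min_{\eta'\in\Psi(\rho,\mathcal{S})}\langle \eta',\Delta\eta'\rangle,\qquad \Psi(\rho,\mathcal{S})=\Big\{(\rho-r)^+ : r=\sum_{S\in\mathcal{S}}\alpha_S S,\ \alpha_S\ge 0,\ \sum_{S\in\mathcal{S}}\alpha_S\le 1\Big\}.$$ Equivalently, $\eta$ is the unique vector satisfying $\eta=\big(\rho-\sum_{S\in\mathcal{S}}\alpha_S S\big)^+$ for some $\alpha_S\ge 0$ with $\sum_{S\in\mathcal{S}}\alpha_S=1$ such that $\alpha_{S_m}>0$ implies $\langle \eta,\Delta S_m\rangle\ge\langle\eta,\Delta S_k\rangle$ for all $k$.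
   Context: Model: $Q$ queues indexed $q\in\{1,\dots,Q\}$, discrete time $t=0,1,2,\dots$. Arrivals: $A(t)=(A_1(t),\dots,A_Q(t))$ with $0\le A_q(t)\le \bar A_q$ for finite constants $\bar A_q$, and for each $q$ the limit $\rho_q=\lim_{t\to\infty}\frac1t\sum_{s=0}^{t-1}A_q(s)$ exists and lies in $(0,\infty)$; $\rho=(\rho_1,\dots,\rho_Q)$. In each slot a service vector $S(t)\in\mathcal{S}$ is chosen; departures are $D_q(t)=\min\{S_q(t),X_q(t)\}$, and the workload evolves as $X(t+1)=X(t)+A(t)-D(t)$ with $X(0)=0$. MaxWeight policy with matrix $\Delta$: at each $t$, $S(t)\in\arg\max_{S\in\mathcal{S}}\langle S,\Delta X(t)\rangle$ (ties broken arbitrarily). $\langle x,y\rangle=\sum_q x_qy_q$, and $(x)^+$ is the componentwise positive part. Stability region: $\mathcal{P}=\{r\in\mathbb{R}^Q_{\ge0}: r\le\sum_{n=1}^N\alpha_nS_n \text{ componentwise for some }\alpha_n\ge0,\ \sum_n\alpha_n=1\}$. *)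

theory Defs
  imports "HOL-Analysis.Analysis"
begin

text \<open>Vectors in R^Q are modelled as real^'q for a finite index type 'q (Q = CARD('q)).\<close>

definition pos_part :: "real^'q \<Rightarrow> real^'q" where
  "pos_part x = (\<chi> q. max 0 (x $ q))"

definition cmin :: "real^'q \<Rightarrow> real^'q \<Rightarrow> real^'q" where
  "cmin x y = (\<chi> q. min (x $ q) (y $ q))"

definition is_diag_pos :: "real^'q^'q \<Rightarrow> bool" where
  "is_diag_pos D \<longleftrightarrow> (\<forall>i j. i \<noteq> j \<longrightarrow> D $ i $ j = 0) \<and> (\<forall>i. D $ i $ i > 0)"

fun workload :: "(nat \<Rightarrow> real^'q) \<Rightarrow> (nat \<Rightarrow> real^'q) \<Rightarrow> nat \<Rightarrow> real^'q" where
  "workload A S 0 = 0"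
| "workload A S (Suc t) = workload A S t + A t - cmin (S t) (workload A S t)"

definition maxweight :: "(real^'q) set \<Rightarrow> real^'q^'q \<Rightarrow> (nat \<Rightarrow> real^'q) \<Rightarrow> (nat \<Rightarrow> real^'q) \<Rightarrow> bool" where
  "maxweight SS D A S \<longleftrightarrow> (\<forall>t. S t \<in> SS \<and>
     (\<forall>S'\<in>SS. S' \<bullet> (D *v workload A S t) \<le> S t \<bullet> (D *v workload A S t)))"

definition arrival_trace :: "(nat \<Rightarrow> real^'q) \<Rightarrow> real^'q \<Rightarrow> bool" where
  "arrival_trace A rho \<longleftrightarrow>
     (\<exists>Abar. \<forall>t q. 0 \<le> A t $ q \<and> A t $ q \<le> Abar $ q) \<and>
     (\<forall>q. (\<lambda>t. (\<Sum>s<t. A s $ q) / real t) \<longlonglongrightarrow> rho $ q)"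

definition stab_region :: "(real^'q) set \<Rightarrow> (real^'q) set" where
  "stab_region SS = {r. (\<forall>q. 0 \<le> r $ q) \<and>
     (\<exists>\<alpha>. (\<forall>S\<in>SS. 0 \<le> \<alpha> S) \<and> (\<Sum>S\<in>SS. \<alpha> S) = 1 \<and>
          (\<forall>q. r $ q \<le> (\<Sum>S\<in>SS. \<alpha> S *\<^sub>R S) $ q))}"

definition Psi :: "real^'q \<Rightarrow> (real^'q) set \<Rightarrow> (real^'q) set" where
  "Psi rho SS = {pos_part (rho - (\<Sum>S\<in>SS. \<alpha> S *\<^sub>R S)) | \<alpha>.
      (\<forall>S\<in>SS. 0 \<le> \<alpha> S) \<and> (\<Sum>S\<in>SS. \<alpha> S) \<le> 1}"

end

theory Submission imports Defs begin


lemma diag_mv: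
  assumes "is_diag_pos D" shows "(D *v x) $ i = D$i$i * x$i"
proof -
  have "(D *v x) $ i = (\<Sum>j\<in>UNIV. D$i$j * x$j)" by (simp add: matrix_vector_mult_def)
  also have "\<dots> = (\<Sum>j\<in>UNIV. if j = i then D$i$i * x$i else 0)"
    by (rule sum.cong) (use assms in \<open>auto simp: is_diag_pos_def\<close>)
  finally show ?thesis by simp
qed

lemma inner_D:
  assumes "is_diag_pos D" shows "x \<bullet> (D *v y) = (\<Sum>q\<in>UNIV. D$q$q * x$q * y$q)"
  by (simp add: inner_vec_def diag_mv[OF assms] algebra_simps)

lemma sq_pos_part_le: "(max 0 (x - h))^2 \<le> (max 0 x - h)^2" for x h :: real
proof (cases "x - h \<le> 0")
  case True then show ?thesis by simp
next
  case False
  show ?thesis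
  proof (cases "x \<ge> 0")
    case True then show ?thesis using False by simp
  next
    case F2: False
    have "0 \<le> x - h" "x - h \<le> -h" using False F2 by auto
    then have "(x-h)^2 \<le> (-h)^2" by (intro power_mono) auto
    then show ?thesis using False F2 by simp
  qed
qed

lemma vs_comp: "(\<Sum>S\<in>SS. a S *\<^sub>R S) $ q = (\<Sum>S\<in>SS. a S * S $ q)" for SS :: "(real^'q) set"
  by simp

lemma exists_opt:
  fixes SS :: "(real^'q) set" and d :: "'q \<Rightarrow> real" and rho :: "real^'q"
  assumes fin: "finite SS" and ne: "SS \<noteq> {}" and dpos: "\<forall>q. 0 < d q"
  shows "\<exists>\<alpha>. (\<forall>S\<in>SS. 0 \<le> \<alpha> S) \<and> sum \<alpha> SS = 1 \<and>
     (\<forall>S\<in>SS. (\<Sum>q\<in>UNIV. d q * max 0 (rho$q - (\<Sum>S\<in>SS. \<alpha> S *\<^sub>R S)$q) * S$q)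
          \<le> (\<Sum>q\<in>UNIV. d q * max 0 (rho$q - (\<Sum>S\<in>SS. \<alpha> S *\<^sub>R S)$q) * (\<Sum>S\<in>SS. \<alpha> S *\<^sub>R S)$q))"
proof -
  define H where "H = convex hull SS"
  define g where "g r = (\<Sum>q\<in>UNIV. d q * (max 0 (rho$q - r$q))^2)" for r :: "real^'q"
  have cH: "compact H" unfolding H_def by (rule compact_convex_hull[OF finite_imp_compact[OF fin]])
  have neH: "H \<noteq> {}" using ne by (simp add: H_def)
  have cg: "continuous_on H g" unfolding g_def by (intro continuous_intros)
  obtain r where rH: "r \<in> H" and rmin: "\<And>y. y \<in> H \<Longrightarrow> g r \<le> g y"
    using continuous_attains_inf[OF cH neH cg] by blast
  obtain \<alpha> where a0: "\<forall>S\<in>SS. 0 \<le> \<alpha> S" and a1: "sum \<alpha> SS = 1" and ar: "(\<Sum>S\<in>SS. \<alpha> S *\<^sub>R S) = r"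
    using rH unfolding H_def convex_hull_finite[OF fin] by blast
  define e where "e q = max 0 (rho$q - r$q)" for q
  have var: "(\<Sum>q\<in>UNIV. d q * e q * S$q) \<le> (\<Sum>q\<in>UNIV. d q * e q * r$q)" if S: "S \<in> SS" for S
  proof (rule ccontr)
    define v where "v = S - r"
    define a where "a = (\<Sum>q\<in>UNIV. d q * e q * v$q)"
    define W where "W = (\<Sum>q\<in>UNIV. d q * (v$q)^2)"
    assume "\<not> ?thesis"
    then have apos: "a > 0" by (simp add: a_def v_def algebra_simps sum_subtractf)
    have W0: "W \<ge> 0" unfolding W_def using dpos by (intro sum_nonneg) (simp add: less_imp_le)
    define l where "l = min 1 (a / (W + 1))"
    have l0: "0 < l" "l \<le> 1" using apos W0 by (auto simp: l_def)
    have "r + l *\<^sub>R v \<in> H"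
    proof -
      have "r + l *\<^sub>R v = (1 - l) *\<^sub>R r + l *\<^sub>R S" by (simp add: v_def algebra_simps)
      moreover have "S \<in> H" using S by (simp add: H_def hull_inc)
      moreover have "(1 - l) *\<^sub>R r + l *\<^sub>R S \<in> H"
        using convexD[OF convex_convex_hull[of SS], of r S "1-l" l] rH \<open>S \<in> H\<close> l0 unfolding H_def by auto
      ultimately show ?thesis by simp
    qed
    then have "g r \<le> g (r + l *\<^sub>R v)" by (rule rmin)
    also have "\<dots> \<le> (\<Sum>q\<in>UNIV. d q * (e q - l * v$q)^2)"
      unfolding g_def e_def
      by (intro sum_mono mult_left_mono) (use dpos sq_pos_part_le[of "rho$_ - r$_" "l * v$_"] in \<open>auto simp: less_imp_le algebra_simps\<close>)
    also have "\<dots> = g r - 2 * l * a + l^2 * W"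
      by (simp add: g_def e_def a_def W_def power2_eq_square algebra_simps sum.distrib sum_subtractf sum_distrib_left)
    finally have "2 * l * a \<le> l^2 * W" by simp
    then have "2 * a \<le> l * W" using l0 by (simp add: power2_eq_square)
    moreover have "l * W \<le> a / (W + 1) * W" using W0 by (intro mult_right_mono) (auto simp: l_def)
    moreover have "a / (W + 1) * W < a" using W0 apos by (simp add: field_simps)
    ultimately show False using apos by linarith
  qed
  show ?thesis using a0 a1 var by (intro exI[of _ \<alpha>]) (simp add: ar e_def)
qed




lemma cesaro_sq:
  fixes c :: "nat \<Rightarrow> real"
  assumes c0: "\<And>s. c s \<ge> 0" and lim: "(\<lambda>s. c s / real s) \<longlonglongrightarrow> 0"
  shows "(\<lambda>t. (\<Sum>s<t. c (Suc s)) / (real t)^2) \<longlonglongrightarrow> 0"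
proof (rule LIMSEQ_I)
  fix r :: real assume r: "0 < r"
  obtain N where N: "\<And>s. s \<ge> N \<Longrightarrow> norm (c s / real s - 0) < r/2"
    using LIMSEQ_D[OF lim, of "r/2"] r by auto
  define M where "M = (\<Sum>s<N. c (Suc s))"
  have M0: "M \<ge> 0" unfolding M_def using c0 by (intro sum_nonneg) auto
  have cb: "c (Suc s) \<le> M + r/2 * real (Suc s)" for s
  proof (cases "Suc s \<ge> N")
    case True
    then have "c (Suc s) / real (Suc s) < r/2" using N[OF True] c0[of "Suc s"] by simp
    then have "c (Suc s) < r/2 * real (Suc s)" by (simp add: field_simps)
    then show ?thesis using M0 by linarith
  next
    case False
    then have "c (Suc s) \<le> M" unfolding M_def using c0
      by (intro member_le_sum) auto
    moreover have "0 \<le> r/2 * real (Suc s)" using r by simp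
    ultimately show ?thesis by linarith
  qed
  obtain no :: nat where no: "real no > 2 * M / r + 1" using reals_Archimedean2 by blast
  show "\<exists>no. \<forall>n\<ge>no. norm ((\<Sum>s<n. c (Suc s)) / (real n)^2 - 0) < r"
  proof (intro exI allI impI)
    fix n assume n: "no \<le> n"
    then have npos: "real n > 2 * M / r + 1" using no by linarith
    have "2 * M / r \<ge> 0" using M0 r by simp
    then have np: "real n > 0" using npos by linarith
    have "(\<Sum>s<n. c (Suc s)) \<le> (\<Sum>s<n. M + r/2 * real n)"
    proof (rule sum_mono)
      fix s assume "s \<in> {..<n}"
      then have "real (Suc s) \<le> real n" by simp
      then have "r/2 * real (Suc s) \<le> r/2 * real n" using r by (intro mult_left_mono) auto
      then show "c (Suc s) \<le> M + r/2 * real n" using cb[of s] by linarith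
    qed
    also have "\<dots> = real n * M + r/2 * (real n)^2" by (simp add: power2_eq_square algebra_simps)
    finally have le: "(\<Sum>s<n. c (Suc s)) \<le> real n * M + r/2 * (real n)^2" .
    have "(\<Sum>s<n. c (Suc s)) / (real n)^2 \<le> M / real n + r/2"
      using le np by (simp add: field_simps power2_eq_square)
    also have "M / real n < r/2"
    proof -
      have "M * 2 < r * real n" using npos r by (simp add: field_simps)
      then show ?thesis using np by (simp add: field_simps)
    qed
    finally have "(\<Sum>s<n. c (Suc s)) / (real n)^2 < r" by simp
    moreover have "(\<Sum>s<n. c (Suc s)) / (real n)^2 \<ge> 0" using c0 by (intro divide_nonneg_nonneg sum_nonneg) auto
    ultimately show "norm ((\<Sum>s<n. c (Suc s)) / (real n)^2 - 0) < r" by simp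
  qed
qed

lemma abel_o:
  fixes Y a :: "nat \<Rightarrow> real"
  assumes Y0: "Y 0 = 0" and Yinc: "\<And>s. \<bar>Y (Suc s) - Y s\<bar> \<le> B"
    and ca: "(\<lambda>t. (\<Sum>u<t. a u) / real t) \<longlonglongrightarrow> 0"
  shows "(\<lambda>t. (\<Sum>s<t. Y s * a s) / (real t)^2) \<longlonglongrightarrow> 0"
proof -
  define C where "C t = (\<Sum>u<t. a u)" for t
  have abel: "(\<Sum>s<t. Y s * a s) = Y t * C t - (\<Sum>s<t. (Y (Suc s) - Y s) * C (Suc s))" for t
    by (induction t) (simp_all add: C_def Y0 algebra_simps)
  have B0: "B \<ge> 0" using Yinc[of 0] by linarith
  have Yb: "\<bar>Y t\<bar> \<le> B * real t" for t
  proof (induction t)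
    case (Suc t) then show ?case using Yinc[of t] by (simp add: algebra_simps)
  qed (simp add: Y0)
  have cl: "(\<lambda>s. \<bar>C s\<bar> / real s) \<longlonglongrightarrow> 0"
    using tendsto_rabs_zero[OF ca] by (simp add: C_def)
  have G: "(\<lambda>t. (\<Sum>s<t. \<bar>C (Suc s)\<bar>) / (real t)^2) \<longlonglongrightarrow> 0"
    by (rule cesaro_sq[OF _ cl]) simp
  have bnd: "\<bar>\<Sum>s<t. Y s * a s\<bar> \<le> B * real t * \<bar>C t\<bar> + B * (\<Sum>s<t. \<bar>C (Suc s)\<bar>)" for t
  proof -
    have "\<bar>\<Sum>s<t. (Y (Suc s) - Y s) * C (Suc s)\<bar> \<le> (\<Sum>s<t. \<bar>(Y (Suc s) - Y s) * C (Suc s)\<bar>)"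
      by (rule sum_abs)
    also have "\<dots> \<le> (\<Sum>s<t. B * \<bar>C (Suc s)\<bar>)"
      by (intro sum_mono) (simp add: abs_mult Yinc mult_right_mono)
    finally have 1: "\<bar>\<Sum>s<t. (Y (Suc s) - Y s) * C (Suc s)\<bar> \<le> B * (\<Sum>s<t. \<bar>C (Suc s)\<bar>)"
      by (simp add: sum_distrib_left)
    have 2: "\<bar>Y t * C t\<bar> \<le> B * real t * \<bar>C t\<bar>" by (simp add: abs_mult Yb mult_right_mono)
    show ?thesis unfolding abel using 1 2 by linarith
  qed
  have lim2: "(\<lambda>t. B * (\<bar>C t\<bar> / real t) + B * ((\<Sum>s<t. \<bar>C (Suc s)\<bar>) / (real t)^2)) \<longlonglongrightarrow> 0"
    using tendsto_add[OF tendsto_mult_right_zero[OF cl, of B] tendsto_mult_right_zero[OF G, of B]] by simp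
  show ?thesis
  proof (rule Lim_null_comparison[OF _ lim2])
    show "\<forall>\<^sub>F t in sequentially. norm ((\<Sum>s<t. Y s * a s) / (real t)^2) \<le> B * (\<bar>C t\<bar> / real t) + B * ((\<Sum>s<t. \<bar>C (Suc s)\<bar>) / (real t)^2)"
    proof (rule eventually_sequentiallyI[of 1])
      fix t :: nat assume t: "1 \<le> t"
      then have tp: "real t > 0" by simp
      have "norm ((\<Sum>s<t. Y s * a s) / (real t)^2) = \<bar>\<Sum>s<t. Y s * a s\<bar> / (real t)^2"
        by (simp add: abs_divide)
      also have "\<dots> \<le> (B * real t * \<bar>C t\<bar> + B * (\<Sum>s<t. \<bar>C (Suc s)\<bar>)) / (real t)^2"
        by (intro divide_right_mono bnd) simp
      also have "\<dots> = B * (\<bar>C t\<bar> / real t) + B * ((\<Sum>s<t. \<bar>C (Suc s)\<bar>) / (real t)^2)"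
        using tp by (simp add: field_simps power2_eq_square)
      finally show "norm ((\<Sum>s<t. Y s * a s) / (real t)^2) \<le> B * (\<bar>C t\<bar> / real t) + B * ((\<Sum>s<t. \<bar>C (Suc s)\<bar>) / (real t)^2)" .
    qed
  qed
qed




lemma swap_lemma: "(\<Sum>q\<in>UNIV. c q * (\<Sum>S\<in>SS. a S * S$q)) = (\<Sum>S\<in>SS. a S * (\<Sum>q\<in>UNIV. c q * S$q))"
  for SS :: "(real^'q) set"
  by (simp add: sum_distrib_left sum.swap[of _ UNIV] mult_ac)

lemma kkt_min:
  fixes SS :: "(real^'q) set" and d :: "'q \<Rightarrow> real" and rho z y :: "real^'q"
  assumes fin: "finite SS" and dpos: "\<forall>q. 0 < d q" and Snn: "\<forall>S\<in>SS. \<forall>q. 0 \<le> S$q"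
    and b0: "\<forall>S\<in>SS. 0 \<le> \<beta> S" and b1: "sum \<beta> SS = 1"
    and char: "\<forall>Sm\<in>SS. 0 < \<beta> Sm \<longrightarrow> (\<forall>Sk\<in>SS. (\<Sum>q\<in>UNIV. d q * z$q * Sk$q) \<le> (\<Sum>q\<in>UNIV. d q * z$q * Sm$q))"
    and zdef: "z = pos_part (rho - (\<Sum>S\<in>SS. \<beta> S *\<^sub>R S))"
    and a0: "\<forall>S\<in>SS. 0 \<le> \<alpha> S" and a1: "sum \<alpha> SS \<le> 1"
    and ydef: "y = pos_part (rho - (\<Sum>S\<in>SS. \<alpha> S *\<^sub>R S))"
  shows "(\<Sum>q\<in>UNIV. d q * (z$q)^2) + (\<Sum>q\<in>UNIV. d q * (y$q - z$q)^2) \<le> (\<Sum>q\<in>UNIV. d q * (y$q)^2)"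
proof -
  define val where "val S = (\<Sum>q\<in>UNIV. d q * z$q * S$q)" for S :: "real^'q"
  have z0: "z$q \<ge> 0" for q by (simp add: zdef pos_part_def)
  have val0: "val S \<ge> 0" if "S \<in> SS" for S
    unfolding val_def using that Snn dpos z0 by (intro sum_nonneg) (simp add: less_imp_le)
  define M where "M = (\<Sum>S\<in>SS. \<beta> S * val S)"
  have leM: "val S0 \<le> M" if S0: "S0 \<in> SS" for S0
  proof -
    have "val S0 = (\<Sum>S\<in>SS. \<beta> S * val S0)" using b1 by (simp add: sum_distrib_right[symmetric])
    also have "\<dots> \<le> M" unfolding M_def
    proof (rule sum_mono)
      fix S assume S: "S \<in> SS"
      show "\<beta> S * val S0 \<le> \<beta> S * val S"
      proof (cases "\<beta> S = 0")
        case False then have "\<beta> S > 0" using b0 S by force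
        then show ?thesis using char S S0 by (intro mult_left_mono) (auto simp: val_def)
      qed simp
    qed
    finally show ?thesis .
  qed
  have M0: "M \<ge> 0" unfolding M_def using b0 val0 by (intro sum_nonneg) auto
  have zq: "z$q = max 0 (rho$q - (\<Sum>S\<in>SS. \<beta> S * S$q))" for q by (simp add: zdef pos_part_def)
  have yq: "y$q = max 0 (rho$q - (\<Sum>S\<in>SS. \<alpha> S * S$q))" for q by (simp add: ydef pos_part_def)
  have rz: "(\<Sum>q\<in>UNIV. d q * z$q * (\<Sum>S\<in>SS. \<beta> S * S$q)) = M"
    using swap_lemma[where c="\<lambda>q. d q * z$q" and SS=SS and a=\<beta>] by (simp add: M_def val_def)
  have rr: "(\<Sum>q\<in>UNIV. d q * z$q * (\<Sum>S\<in>SS. \<alpha> S * S$q)) \<le> M"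
  proof -
    have "(\<Sum>q\<in>UNIV. d q * z$q * (\<Sum>S\<in>SS. \<alpha> S * S$q)) = (\<Sum>S\<in>SS. \<alpha> S * val S)"
      using swap_lemma[where c="\<lambda>q. d q * z$q" and SS=SS and a=\<alpha>] by (simp add: val_def)
    also have "\<dots> \<le> (\<Sum>S\<in>SS. \<alpha> S * M)" using a0 leM by (intro sum_mono mult_left_mono) auto
    also have "\<dots> = sum \<alpha> SS * M" by (simp add: sum_distrib_right)
    also have "\<dots> \<le> M" using mult_right_mono[OF a1 M0] by simp
    finally show ?thesis .
  qed
  have zz: "(\<Sum>q\<in>UNIV. d q * (z$q)^2) = (\<Sum>q\<in>UNIV. d q * z$q * rho$q) - M"
  proof -
    have "(\<Sum>q\<in>UNIV. d q * (z$q)^2) = (\<Sum>q\<in>UNIV. d q * z$q * rho$q - d q * z$q * (\<Sum>S\<in>SS. \<beta> S * S$q))"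
      by (rule sum.cong) (auto simp: zq power2_eq_square algebra_simps max_def)
    then show ?thesis using rz by (simp add: sum_subtractf)
  qed
  have zy: "(\<Sum>q\<in>UNIV. d q * z$q * rho$q) - M \<le> (\<Sum>q\<in>UNIV. d q * z$q * y$q)"
  proof -
    have "(\<Sum>q\<in>UNIV. d q * z$q * rho$q) - M \<le> (\<Sum>q\<in>UNIV. d q * z$q * rho$q) - (\<Sum>q\<in>UNIV. d q * z$q * (\<Sum>S\<in>SS. \<alpha> S * S$q))"
      using rr by simp
    also have "\<dots> = (\<Sum>q\<in>UNIV. d q * z$q * (rho$q - (\<Sum>S\<in>SS. \<alpha> S * S$q)))"
      by (simp add: sum_subtractf algebra_simps)
    also have "\<dots> \<le> (\<Sum>q\<in>UNIV. d q * z$q * y$q)"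
      using dpos z0 by (intro sum_mono mult_left_mono) (auto simp: yq less_imp_le)
    finally show ?thesis .
  qed
  have "(\<Sum>q\<in>UNIV. d q * (y$q)^2) - (\<Sum>q\<in>UNIV. d q * (y$q - z$q)^2) = 2 * (\<Sum>q\<in>UNIV. d q * z$q * y$q) - (\<Sum>q\<in>UNIV. d q * (z$q)^2)"
    by (simp add: sum_subtractf[symmetric] sum_distrib_left power2_eq_square algebra_simps)
  then show ?thesis using zz zy by linarith
qed




lemma conv:
  fixes SS :: "(real^'q) set" and D :: "real^'q^'q" and rho r \<eta> :: "real^'q"
    and A S :: "nat \<Rightarrow> real^'q" and \<alpha> :: "real^'q \<Rightarrow> real"
  assumes fin: "finite SS" and Snn: "\<forall>P\<in>SS. \<forall>q. 0 \<le> P $ q" and diag: "is_diag_pos D"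
    and arr: "arrival_trace A rho" and mw: "maxweight SS D A S"
    and a0: "\<forall>P\<in>SS. 0 \<le> \<alpha> P" and a1: "sum \<alpha> SS = 1"
    and rdef: "r = (\<Sum>P\<in>SS. \<alpha> P *\<^sub>R P)" and edef: "\<eta> = pos_part (rho - r)"
    and var: "\<forall>P\<in>SS. (\<Sum>q\<in>UNIV. D$q$q * \<eta>$q * P$q) \<le> (\<Sum>q\<in>UNIV. D$q$q * \<eta>$q * r$q)"
  shows "(\<lambda>t. (1 / real t) *\<^sub>R workload A S t) \<longlonglongrightarrow> \<eta>"
proof -
  define d where "d q = D$q$q" for q
  have dpos: "d q > 0" for q using diag by (simp add: d_def is_diag_pos_def)
  define X where "X t = workload A S t" for t
  have Xrec: "X (Suc t) $ q = X t $ q + A t $ q - min (S t $ q) (X t $ q)" for t q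
    by (simp add: X_def cmin_def)
  obtain Abar where Ab: "\<And>t q. 0 \<le> A t $ q \<and> A t $ q \<le> Abar $ q"
    and Alim: "\<And>q. (\<lambda>t. (\<Sum>s<t. A s $ q) / real t) \<longlonglongrightarrow> rho $ q"
    using arr unfolding arrival_trace_def by blast
  have St: "S t \<in> SS" for t using mw by (simp add: maxweight_def)
  have mwI: "P \<bullet> (D *v X t) \<le> S t \<bullet> (D *v X t)" if "P \<in> SS" for P t
    using mw that by (simp add: maxweight_def X_def)
  have X0: "X t $ q \<ge> 0" for t q
  proof (induction t)
    case 0 then show ?case by (simp add: X_def)
  next
    case (Suc t) then show ?case using Ab[of t q] by (auto simp: Xrec min_def)
  qed
  define K where "K = (\<Sum>q\<in>UNIV. Abar $ q) + (\<Sum>P\<in>SS. \<Sum>q\<in>UNIV. P $ q)"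
  have Abar0: "Abar $ q \<ge> 0" for q using Ab[of 0 q] by linarith
  have sumP0: "(\<Sum>q\<in>UNIV. P $ q) \<ge> 0" if "P \<in> SS" for P using Snn that by (intro sum_nonneg) auto
  have AK: "Abar $ q \<le> K" for q
  proof -
    have "Abar $ q \<le> (\<Sum>q\<in>UNIV. Abar $ q)" using Abar0 by (intro member_le_sum) auto
    moreover have "(\<Sum>P\<in>SS. \<Sum>q\<in>UNIV. P $ q) \<ge> 0" by (rule sum_nonneg) (rule sumP0)
    ultimately show ?thesis by (simp add: K_def)
  qed
  have SK: "P $ q \<le> K" if P: "P \<in> SS" for P q
  proof -
    have "P $ q \<le> (\<Sum>q\<in>UNIV. P $ q)" using Snn P by (intro member_le_sum) auto
    also have "\<dots> \<le> (\<Sum>P\<in>SS. \<Sum>q\<in>UNIV. P $ q)" using sumP0 P fin by (intro member_le_sum) auto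
    also have "(\<Sum>q\<in>UNIV. Abar $ q) \<ge> 0" using Abar0 by (intro sum_nonneg) auto
    ultimately show ?thesis by (simp add: K_def)
  qed
  have eq: "\<eta> $ q = max 0 (rho $ q - r $ q)" for q by (simp add: edef pos_part_def)
  have e0: "\<eta> $ q \<ge> 0" for q by (simp add: eq)
  define Y where "Y q t = X t $ q - real t * \<eta> $ q" for q t
  define B where "B q = 2 * K + \<eta> $ q" for q
  define dep where "dep t q = min (S t $ q) (X t $ q)" for t q
  have dep_le: "dep t q \<le> S t $ q" "0 \<le> dep t q" for t q
    using Snn St X0 by (auto simp: dep_def)
  have YS: "Y q (Suc t) = Y q t + (A t $ q - dep t q - \<eta> $ q)" for q t
    by (simp add: Y_def Xrec dep_def algebra_simps)
  have Yinc: "\<bar>Y q (Suc t) - Y q t\<bar> \<le> B q" for q t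
  proof -
    have "A t $ q \<le> K" "S t $ q \<le> K" using Ab[of t q] AK[of q] SK[OF St] by (auto intro: order_trans)
    then show ?thesis using YS[of q t] dep_le[of t q] Ab[of t q] e0[of q] by (simp add: B_def abs_le_iff)
  qed
  have Y0: "Y q 0 = 0" for q by (simp add: Y_def X_def)
  have ca: "(\<lambda>t. (\<Sum>u<t. A u $ q - rho $ q) / real t) \<longlonglongrightarrow> 0" for q
  proof -
    have "(\<lambda>t. (\<Sum>s<t. A s $ q) / real t - rho $ q) \<longlonglongrightarrow> 0"
      using tendsto_diff[OF Alim[of q] tendsto_const[of "rho $ q"]] by simp
    then show ?thesis
    proof (rule Lim_transform_eventually)
      show "\<forall>\<^sub>F t in sequentially. (\<Sum>s<t. A s $ q) / real t - rho $ q = (\<Sum>u<t. A u $ q - rho $ q) / real t"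
        by (rule eventually_sequentiallyI[of 1]) (simp add: sum_subtractf field_simps)
    qed
  qed
  have E: "(\<lambda>t. (\<Sum>s<t. Y q s * (A s $ q - rho $ q)) / (real t)^2) \<longlonglongrightarrow> 0" for q
    by (rule abel_o[OF Y0 Yinc ca])
  define c where "c = (\<Sum>q\<in>UNIV. d q * \<eta>$q * r$q)"
  have rq: "r $ q = (\<Sum>P\<in>SS. \<alpha> P * P $ q)" for q by (simp add: rdef)
  have ee: "(\<Sum>q\<in>UNIV. d q * (\<eta>$q)^2) = (\<Sum>q\<in>UNIV. d q * \<eta>$q * rho$q) - c"
  proof -
    have "(\<Sum>q\<in>UNIV. d q * (\<eta>$q)^2) = (\<Sum>q\<in>UNIV. d q * \<eta>$q * rho$q - d q * \<eta>$q * r$q)"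
      by (rule sum.cong) (auto simp: eq power2_eq_square algebra_simps max_def)
    then show ?thesis by (simp add: sum_subtractf c_def)
  qed
  have step: "(\<Sum>q\<in>UNIV. d q * Y q t * (A t $ q - dep t q - \<eta> $ q))
      \<le> (\<Sum>q\<in>UNIV. d q * Y q t * (A t $ q - rho $ q)) + (\<Sum>q\<in>UNIV. d q * K^2)" for t
  proof -
    have i1: "X t $ q * S t $ q - K^2 \<le> X t $ q * dep t q" for q
    proof (cases "S t $ q \<le> X t $ q")
      case True then show ?thesis by (simp add: dep_def)
    next
      case False
      have "X t $ q * S t $ q \<le> S t $ q * S t $ q" using False X0[of t q] by (intro mult_right_mono) auto
      also have "\<dots> \<le> K * K" using SK[OF St, of t q] Snn St by (intro mult_mono) (auto intro: order_trans[of 0 "S t $ q"])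
      finally have "X t $ q * S t $ q - K^2 \<le> 0" by (simp add: power2_eq_square)
      moreover have "0 \<le> X t $ q * X t $ q" by simp
      moreover have "X t $ q * dep t q = X t $ q * X t $ q" using False by (simp add: dep_def)
      ultimately show ?thesis by linarith
    qed
    have mwr: "(\<Sum>q\<in>UNIV. d q * X t $ q * r $ q) \<le> (\<Sum>q\<in>UNIV. d q * X t $ q * S t $ q)"
    proof -
      have "(\<Sum>q\<in>UNIV. d q * X t $ q * r $ q) = (\<Sum>P\<in>SS. \<alpha> P * (\<Sum>q\<in>UNIV. d q * X t $ q * P $ q))"
        by (simp add: rq sum_distrib_left sum.swap[of _ UNIV] mult_ac)
      also have "\<dots> \<le> (\<Sum>P\<in>SS. \<alpha> P * (\<Sum>q\<in>UNIV. d q * X t $ q * S t $ q))"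
      proof (rule sum_mono)
        fix P assume P: "P \<in> SS"
        have "(\<Sum>q\<in>UNIV. d q * X t $ q * P $ q) \<le> (\<Sum>q\<in>UNIV. d q * X t $ q * S t $ q)"
          using mwI[OF P, of t] by (simp add: inner_D[OF diag] d_def mult_ac)
        then show "\<alpha> P * (\<Sum>q\<in>UNIV. d q * X t $ q * P $ q) \<le> \<alpha> P * (\<Sum>q\<in>UNIV. d q * X t $ q * S t $ q)"
          using a0 P by (intro mult_left_mono) auto
      qed
      also have "\<dots> = (\<Sum>q\<in>UNIV. d q * X t $ q * S t $ q)" by (simp add: sum_distrib_right[symmetric] a1)
      finally show ?thesis .
    qed
    have xe: "(\<Sum>q\<in>UNIV. d q * X t $ q * rho $ q) - (\<Sum>q\<in>UNIV. d q * X t $ q * r $ q) \<le> (\<Sum>q\<in>UNIV. d q * X t $ q * \<eta> $ q)"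
    proof -
      have "(\<Sum>q\<in>UNIV. d q * X t $ q * rho $ q) - (\<Sum>q\<in>UNIV. d q * X t $ q * r $ q) = (\<Sum>q\<in>UNIV. d q * X t $ q * (rho $ q - r $ q))"
        by (simp add: sum_subtractf sum.distrib algebra_simps)
      also have "\<dots> \<le> (\<Sum>q\<in>UNIV. d q * X t $ q * \<eta> $ q)"
        using dpos X0 by (intro sum_mono mult_left_mono) (auto simp: eq less_imp_le)
      finally show ?thesis .
    qed
    have part1: "(\<Sum>q\<in>UNIV. d q * X t $ q * (A t $ q - dep t q - \<eta> $ q))
        \<le> (\<Sum>q\<in>UNIV. d q * X t $ q * (A t $ q - rho $ q)) + (\<Sum>q\<in>UNIV. d q * K^2)"
    proof -
      have "(\<Sum>q\<in>UNIV. d q * X t $ q * (A t $ q - dep t q - \<eta> $ q))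
          = (\<Sum>q\<in>UNIV. d q * X t $ q * A t $ q) - (\<Sum>q\<in>UNIV. d q * (X t $ q * dep t q)) - (\<Sum>q\<in>UNIV. d q * X t $ q * \<eta> $ q)"
        by (simp add: sum_subtractf sum.distrib algebra_simps)
      also have "(\<Sum>q\<in>UNIV. d q * (X t $ q * dep t q)) \<ge> (\<Sum>q\<in>UNIV. d q * (X t $ q * S t $ q - K^2))"
        using dpos i1 by (intro sum_mono mult_left_mono) (auto simp: less_imp_le)
      moreover have "(\<Sum>q\<in>UNIV. d q * (X t $ q * S t $ q - K^2)) = (\<Sum>q\<in>UNIV. d q * X t $ q * S t $ q) - (\<Sum>q\<in>UNIV. d q * K^2)"
        by (simp add: sum_subtractf sum.distrib algebra_simps)
      moreover have "(\<Sum>q\<in>UNIV. d q * X t $ q * (A t $ q - rho $ q)) = (\<Sum>q\<in>UNIV. d q * X t $ q * A t $ q) - (\<Sum>q\<in>UNIV. d q * X t $ q * rho $ q)"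
        by (simp add: sum_subtractf sum.distrib algebra_simps)
      ultimately show ?thesis using mwr xe by linarith
    qed
    have part2: "(\<Sum>q\<in>UNIV. d q * \<eta> $ q * (A t $ q - rho $ q)) \<le> (\<Sum>q\<in>UNIV. d q * \<eta> $ q * (A t $ q - dep t q - \<eta> $ q))"
    proof -
      have "(\<Sum>q\<in>UNIV. d q * \<eta> $ q * S t $ q) \<le> c" using var St by (simp add: c_def d_def)
      moreover have "(\<Sum>q\<in>UNIV. d q * \<eta> $ q * dep t q) \<le> (\<Sum>q\<in>UNIV. d q * \<eta> $ q * S t $ q)"
        using dpos e0 dep_le by (intro sum_mono mult_left_mono) (auto simp: less_imp_le)
      moreover have "(\<Sum>q\<in>UNIV. d q * \<eta> $ q * (A t $ q - dep t q - \<eta> $ q))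
          = (\<Sum>q\<in>UNIV. d q * \<eta> $ q * A t $ q) - (\<Sum>q\<in>UNIV. d q * \<eta> $ q * dep t q) - (\<Sum>q\<in>UNIV. d q * (\<eta>$q)^2)"
        by (simp add: sum_subtractf sum.distrib algebra_simps power2_eq_square)
      moreover have "(\<Sum>q\<in>UNIV. d q * \<eta> $ q * (A t $ q - rho $ q)) = (\<Sum>q\<in>UNIV. d q * \<eta> $ q * A t $ q) - (\<Sum>q\<in>UNIV. d q * \<eta> $ q * rho $ q)"
        by (simp add: sum_subtractf sum.distrib algebra_simps)
      ultimately show ?thesis using ee by linarith
    qed
    have split: "(\<Sum>q\<in>UNIV. d q * Y q t * Z q) = (\<Sum>q\<in>UNIV. d q * X t $ q * Z q) - real t * (\<Sum>q\<in>UNIV. d q * \<eta> $ q * Z q)" for Z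
      by (simp add: Y_def sum_subtractf sum_distrib_left algebra_simps)
    have "real t * (\<Sum>q\<in>UNIV. d q * \<eta> $ q * (A t $ q - rho $ q)) \<le> real t * (\<Sum>q\<in>UNIV. d q * \<eta> $ q * (A t $ q - dep t q - \<eta> $ q))"
      using part2 by (intro mult_left_mono) auto
    then show ?thesis using part1 split[of "\<lambda>q. A t $ q - dep t q - \<eta> $ q"] split[of "\<lambda>q. A t $ q - rho $ q"] by linarith
  qed
  define V where "V t = (\<Sum>q\<in>UNIV. d q * (Y q t)^2)" for t
  define Cst where "Cst = 2 * (\<Sum>q\<in>UNIV. d q * K^2) + (\<Sum>q\<in>UNIV. d q * (B q)^2)"
  have Vstep: "V (Suc t) \<le> V t + 2 * (\<Sum>q\<in>UNIV. d q * Y q t * (A t $ q - rho $ q)) + Cst" for t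
  proof -
    have sq: "(Y q (Suc t))^2 \<le> (Y q t)^2 + 2 * (Y q t * (A t $ q - dep t q - \<eta> $ q)) + (B q)^2" for q
    proof -
      have "(A t $ q - dep t q - \<eta> $ q)^2 \<le> (B q)^2"
        using Yinc[of q t] YS[of q t] by (simp add: abs_le_square_iff[symmetric])
      then show ?thesis by (simp add: YS power2_eq_square algebra_simps)
    qed
    have "V (Suc t) \<le> (\<Sum>q\<in>UNIV. d q * ((Y q t)^2 + 2 * (Y q t * (A t $ q - dep t q - \<eta> $ q)) + (B q)^2))"
      unfolding V_def using dpos sq by (intro sum_mono mult_left_mono) (auto simp: less_imp_le)
    also have "\<dots> = (\<Sum>q\<in>UNIV. d q * (Y q t)^2 + 2 * (d q * Y q t * (A t $ q - dep t q - \<eta> $ q)) + d q * (B q)^2)"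
      by (rule sum.cong) (simp_all add: algebra_simps)
    also have "\<dots> = V t + 2 * (\<Sum>q\<in>UNIV. d q * Y q t * (A t $ q - dep t q - \<eta> $ q)) + (\<Sum>q\<in>UNIV. d q * (B q)^2)"
      by (simp only: V_def sum.distrib sum_distrib_left)
    finally show ?thesis using step[of t] by (simp add: Cst_def)
  qed
  have Vb: "V t \<le> (\<Sum>q\<in>UNIV. 2 * d q * (\<Sum>s<t. Y q s * (A s $ q - rho $ q))) + Cst * real t" for t
  proof (induction t)
    case 0 then show ?case by (simp add: V_def Y0)
  next
    case (Suc t)
    have "(\<Sum>q\<in>UNIV. 2 * d q * (\<Sum>s<Suc t. Y q s * (A s $ q - rho $ q)))
       = (\<Sum>q\<in>UNIV. 2 * d q * (\<Sum>s<t. Y q s * (A s $ q - rho $ q)) + 2 * (d q * Y q t * (A t $ q - rho $ q)))"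
      by (rule sum.cong) (simp_all add: algebra_simps)
    also have "\<dots> = (\<Sum>q\<in>UNIV. 2 * d q * (\<Sum>s<t. Y q s * (A s $ q - rho $ q))) + 2 * (\<Sum>q\<in>UNIV. d q * Y q t * (A t $ q - rho $ q))"
      by (simp only: sum.distrib sum_distrib_left)
    finally have "(\<Sum>q\<in>UNIV. 2 * d q * (\<Sum>s<Suc t. Y q s * (A s $ q - rho $ q)))
       = (\<Sum>q\<in>UNIV. 2 * d q * (\<Sum>s<t. Y q s * (A s $ q - rho $ q))) + 2 * (\<Sum>q\<in>UNIV. d q * Y q t * (A t $ q - rho $ q))" .
    then show ?case using Suc Vstep[of t] by (simp add: algebra_simps)
  qed
  have V0: "V t \<ge> 0" for t unfolding V_def using dpos by (intro sum_nonneg) (simp add: less_imp_le)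
  have Vlim: "(\<lambda>t. V t / (real t)^2) \<longlonglongrightarrow> 0"
  proof -
    have l1: "(\<lambda>t. (\<Sum>q\<in>UNIV. 2 * d q * ((\<Sum>s<t. Y q s * (A s $ q - rho $ q)) / (real t)^2)) + Cst * (1 / real t)) \<longlonglongrightarrow> 0"
      using tendsto_add[OF tendsto_null_sum[OF tendsto_mult_right_zero[OF E]] tendsto_mult_right_zero[OF lim_1_over_n]]
      by simp
    show ?thesis
    proof (rule Lim_null_comparison[OF _ l1])
      show "\<forall>\<^sub>F t in sequentially. norm (V t / (real t)^2) \<le> (\<Sum>q\<in>UNIV. 2 * d q * ((\<Sum>s<t. Y q s * (A s $ q - rho $ q)) / (real t)^2)) + Cst * (1 / real t)"
      proof (rule eventually_sequentiallyI[of 1])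
        fix t :: nat assume "1 \<le> t"
        then have tp: "real t > 0" by simp
        have "norm (V t / (real t)^2) = V t / (real t)^2" using V0[of t] by simp
        also have "\<dots> \<le> ((\<Sum>q\<in>UNIV. 2 * d q * (\<Sum>s<t. Y q s * (A s $ q - rho $ q))) + Cst * real t) / (real t)^2"
          by (intro divide_right_mono Vb) simp
        also have "\<dots> = (\<Sum>q\<in>UNIV. 2 * d q * ((\<Sum>s<t. Y q s * (A s $ q - rho $ q)) / (real t)^2)) + Cst * (1 / real t)"
        proof -
          have h1: "(\<Sum>q\<in>UNIV. 2 * d q * (\<Sum>s<t. Y q s * (A s $ q - rho $ q))) / (real t)^2
              = (\<Sum>q\<in>UNIV. 2 * d q * ((\<Sum>s<t. Y q s * (A s $ q - rho $ q)) / (real t)^2))"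
            by (subst sum_divide_distrib) (rule sum.cong, simp_all)
          have h2: "Cst * real t / (real t)^2 = Cst * (1 / real t)" using tp by (simp add: power2_eq_square)
          show ?thesis using h1 h2 by (simp add: add_divide_distrib)
        qed
        finally show "norm (V t / (real t)^2) \<le> (\<Sum>q\<in>UNIV. 2 * d q * ((\<Sum>s<t. Y q s * (A s $ q - rho $ q)) / (real t)^2)) + Cst * (1 / real t)" .
      qed
    qed
  qed
  show ?thesis
  proof (rule vec_tendstoI)
    fix q
    have l2: "(\<lambda>t. (V t / (real t)^2) / d q) \<longlonglongrightarrow> 0"
      using tendsto_divide[OF Vlim tendsto_const[of "d q"]] dpos[of q] by simp
    have l3: "(\<lambda>t. (X t $ q / real t - \<eta> $ q)^2) \<longlonglongrightarrow> 0"
    proof (rule Lim_null_comparison[OF _ l2])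
      show "\<forall>\<^sub>F t in sequentially. norm ((X t $ q / real t - \<eta> $ q)^2) \<le> (V t / (real t)^2) / d q"
      proof (rule eventually_sequentiallyI[of 1])
        fix t :: nat assume "1 \<le> t"
        then have tp: "real t > 0" by simp
        have "d q * (Y q t)^2 \<le> V t" unfolding V_def
          using dpos by (intro member_le_sum) (auto simp: less_imp_le)
        then have "(Y q t)^2 \<le> V t / d q" using dpos[of q] by (simp add: field_simps)
        moreover have "(X t $ q / real t - \<eta> $ q)^2 = (Y q t)^2 / (real t)^2"
          using tp by (simp add: Y_def field_simps power2_eq_square)
        ultimately show "norm ((X t $ q / real t - \<eta> $ q)^2) \<le> (V t / (real t)^2) / d q"
          using tp by (simp add: divide_right_mono field_simps)
      qed
    qed
    have "(\<lambda>t. X t $ q / real t - \<eta> $ q) \<longlonglongrightarrow> 0"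
    proof -
      have "(\<lambda>t. sqrt ((X t $ q / real t - \<eta> $ q)^2)) \<longlonglongrightarrow> 0"
        using tendsto_real_sqrt[OF l3] by simp
      then show ?thesis by (simp add: tendsto_rabs_zero_iff)
    qed
    then have "(\<lambda>t. X t $ q / real t) \<longlonglongrightarrow> \<eta> $ q"
      by (simp add: LIM_zero_iff)
    then show "(\<lambda>t. ((1 / real t) *\<^sub>R workload A S t) $ q) \<longlonglongrightarrow> \<eta> $ q"
      by (simp add: X_def)
  qed
qed




lemma nz_D: "is_diag_pos D \<Longrightarrow> x \<bullet> (D *v x) = (\<Sum>q\<in>UNIV. D$q$q * (x$q)^2)"
  by (simp add: inner_D power2_eq_square mult_ac)

lemma kkt_D:
  fixes SS :: "(real^'q) set" and D :: "real^'q^'q" and rho z y :: "real^'q"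
  assumes fin: "finite SS" and Snn: "\<forall>S\<in>SS. \<forall>q. 0 \<le> S $ q" and diag: "is_diag_pos D"
    and ch: "\<exists>\<alpha>. (\<forall>S\<in>SS. 0 \<le> \<alpha> S) \<and> (\<Sum>S\<in>SS. \<alpha> S) = 1
              \<and> z = pos_part (rho - (\<Sum>S\<in>SS. \<alpha> S *\<^sub>R S))
              \<and> (\<forall>Sm\<in>SS. 0 < \<alpha> Sm \<longrightarrow> (\<forall>Sk\<in>SS. z \<bullet> (D *v Sk) \<le> z \<bullet> (D *v Sm)))"
    and y: "y \<in> Psi rho SS"
  shows "z \<bullet> (D *v z) + (\<Sum>q\<in>UNIV. D$q$q * (y$q - z$q)^2) \<le> y \<bullet> (D *v y)"
proof -
  obtain \<beta> where b0: "\<forall>S\<in>SS. 0 \<le> \<beta> S" and b1: "sum \<beta> SS = 1"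
    and zd: "z = pos_part (rho - (\<Sum>S\<in>SS. \<beta> S *\<^sub>R S))"
    and chr: "\<forall>Sm\<in>SS. 0 < \<beta> Sm \<longrightarrow> (\<forall>Sk\<in>SS. z \<bullet> (D *v Sk) \<le> z \<bullet> (D *v Sm))"
    using ch by blast
  obtain \<alpha> where yd: "y = pos_part (rho - (\<Sum>S\<in>SS. \<alpha> S *\<^sub>R S))" and a0: "\<forall>S\<in>SS. 0 \<le> \<alpha> S"
    and a1: "sum \<alpha> SS \<le> 1"
    using y unfolding Psi_def by blast
  have dpos: "\<forall>q. 0 < D$q$q" using diag by (simp add: is_diag_pos_def)
  have chr': "\<forall>Sm\<in>SS. 0 < \<beta> Sm \<longrightarrow> (\<forall>Sk\<in>SS. (\<Sum>q\<in>UNIV. D$q$q * z$q * Sk$q) \<le> (\<Sum>q\<in>UNIV. D$q$q * z$q * Sm$q))"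
    using chr by (simp add: inner_D[OF diag] mult_ac)
  have "(\<Sum>q\<in>UNIV. D$q$q * (z$q)^2) + (\<Sum>q\<in>UNIV. D$q$q * (y$q - z$q)^2) \<le> (\<Sum>q\<in>UNIV. D$q$q * (y$q)^2)"
    by (rule kkt_min[OF fin dpos Snn b0 b1 chr' zd a0 a1 yd])
  then show ?thesis by (simp add: nz_D[OF diag])
qed

lemma eq_of_dist0:
  fixes D :: "real^'q^'q" and y z :: "real^'q"
  assumes diag: "is_diag_pos D" and h: "(\<Sum>q\<in>UNIV. D$q$q * (y$q - z$q)^2) \<le> 0"
  shows "y = z"
proof -
  have nn: "\<forall>q\<in>UNIV. 0 \<le> D$q$q * (y$q - z$q)^2" using diag by (auto simp: is_diag_pos_def less_imp_le)
  have "(\<Sum>q\<in>UNIV. D$q$q * (y$q - z$q)^2) \<ge> 0" using nn by (intro sum_nonneg) auto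
  then have "(\<Sum>q\<in>UNIV. D$q$q * (y$q - z$q)^2) = 0" using h by linarith
  then have "\<forall>q\<in>UNIV. D$q$q * (y$q - z$q)^2 = 0"
    using sum_nonneg_eq_0_iff[where A=UNIV and f="\<lambda>q. D$q$q * (y$q - z$q)^2"] nn by auto
  then have h0: "D$q$q = 0 \<or> y$q = z$q" for q by auto
  show ?thesis
  unfolding vec_eq_iff
  proof
    fix i
    have "D$i$i > 0" using diag by (simp add: is_diag_pos_def)
    then show "y$i = z$i" using h0[of i] by auto
  qed
qed

theorem theorem1:
  fixes SS :: "(real^'q) set" and D :: "real^'q^'q" and rho :: "real^'q"
  assumes "finite SS" and "SS \<noteq> {}"
    and "\<forall>S\<in>SS. \<forall>q. 0 \<le> S $ q"
    and "is_diag_pos D"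
    and "\<forall>q. 0 < rho $ q"
    and "rho \<notin> stab_region SS"
  shows "\<exists>\<eta>. \<eta> \<noteq> 0
    \<and> (\<forall>A S. arrival_trace A rho \<and> maxweight SS D A S \<longrightarrow>
           (\<lambda>t. (1 / real t) *\<^sub>R workload A S t) \<longlonglongrightarrow> \<eta>)
    \<and> (\<eta> \<in> Psi rho SS \<and> (\<forall>\<eta>'\<in>Psi rho SS. \<eta> \<bullet> (D *v \<eta>) \<le> \<eta>' \<bullet> (D *v \<eta>')))
    \<and> (\<forall>\<zeta>. \<zeta> \<in> Psi rho SS \<and> (\<forall>\<eta>'\<in>Psi rho SS. \<zeta> \<bullet> (D *v \<zeta>) \<le> \<eta>' \<bullet> (D *v \<eta>'))
            \<longrightarrow> \<zeta> = \<eta>)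
    \<and> (\<forall>\<zeta>. (\<exists>\<alpha>. (\<forall>S\<in>SS. 0 \<le> \<alpha> S) \<and> (\<Sum>S\<in>SS. \<alpha> S) = 1
              \<and> \<zeta> = pos_part (rho - (\<Sum>S\<in>SS. \<alpha> S *\<^sub>R S))
              \<and> (\<forall>Sm\<in>SS. 0 < \<alpha> Sm \<longrightarrow> (\<forall>Sk\<in>SS. \<zeta> \<bullet> (D *v Sk) \<le> \<zeta> \<bullet> (D *v Sm))))
          \<longleftrightarrow> \<zeta> = \<eta>)"
proof -
  note fin = assms(1) and ne = assms(2) and Snn = assms(3) and diag = assms(4)
    and rpos = assms(5) and ovl = assms(6)
  have dpos: "\<forall>q. 0 < D$q$q" using diag by (simp add: is_diag_pos_def)
  obtain \<alpha> where a0: "\<forall>S\<in>SS. 0 \<le> \<alpha> S" and a1: "sum \<alpha> SS = 1"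
    and var0: "\<forall>S\<in>SS. (\<Sum>q\<in>UNIV. D$q$q * max 0 (rho$q - (\<Sum>S\<in>SS. \<alpha> S *\<^sub>R S)$q) * S$q)
          \<le> (\<Sum>q\<in>UNIV. D$q$q * max 0 (rho$q - (\<Sum>S\<in>SS. \<alpha> S *\<^sub>R S)$q) * (\<Sum>S\<in>SS. \<alpha> S *\<^sub>R S)$q)"
    using exists_opt[OF fin ne, of "\<lambda>q. D$q$q" rho] dpos by blast
  define r where "r = (\<Sum>S\<in>SS. \<alpha> S *\<^sub>R S)"
  define \<eta> where "\<eta> = pos_part (rho - r)"
  have eq: "\<eta>$q = max 0 (rho$q - r$q)" for q by (simp add: \<eta>_def pos_part_def)
  have var: "\<forall>P\<in>SS. (\<Sum>q\<in>UNIV. D$q$q * \<eta>$q * P$q) \<le> (\<Sum>q\<in>UNIV. D$q$q * \<eta>$q * r$q)"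
    using var0 by (simp add: eq r_def)
  define val where "val P = (\<Sum>q\<in>UNIV. D$q$q * \<eta>$q * P$q)" for P :: "real^'q"
  define c where "c = (\<Sum>q\<in>UNIV. D$q$q * \<eta>$q * r$q)"
  have cval: "c = (\<Sum>P\<in>SS. \<alpha> P * val P)"
    using swap_lemma[where c="\<lambda>q. D$q$q * \<eta>$q" and SS=SS and a=\<alpha>]
    by (simp add: c_def val_def r_def)
  have chE: "\<forall>Sm\<in>SS. 0 < \<alpha> Sm \<longrightarrow> (\<forall>Sk\<in>SS. \<eta> \<bullet> (D *v Sk) \<le> \<eta> \<bullet> (D *v Sm))"
  proof (intro ballI impI)
    fix Sm Sk assume Sm: "Sm \<in> SS" and ap: "0 < \<alpha> Sm" and Sk: "Sk \<in> SS"
    have "(\<Sum>P\<in>SS. \<alpha> P * (c - val P)) = c - c"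
      using a1 by (simp add: sum_subtractf algebra_simps sum_distrib_right[symmetric] cval)
    then have s0: "(\<Sum>P\<in>SS. \<alpha> P * (c - val P)) = 0" by simp
    have nn: "\<forall>P\<in>SS. 0 \<le> \<alpha> P * (c - val P)" using a0 var by (simp add: val_def c_def)
    have all0: "\<forall>P\<in>SS. \<alpha> P * (c - val P) = 0"
      using sum_nonneg_eq_0_iff[OF fin, of "\<lambda>P. \<alpha> P * (c - val P)"] nn s0 by auto
    have "\<alpha> Sm * (c - val Sm) = 0" using all0 Sm by auto
    then have "val Sm = c" using ap by simp
    then have "val Sk \<le> val Sm" using var Sk by (simp add: val_def c_def)
    then show "\<eta> \<bullet> (D *v Sk) \<le> \<eta> \<bullet> (D *v Sm)" by (simp add: inner_D[OF diag] val_def mult_ac)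
  qed
  have chEx: "\<exists>\<alpha>. (\<forall>S\<in>SS. 0 \<le> \<alpha> S) \<and> (\<Sum>S\<in>SS. \<alpha> S) = 1
              \<and> \<eta> = pos_part (rho - (\<Sum>S\<in>SS. \<alpha> S *\<^sub>R S))
              \<and> (\<forall>Sm\<in>SS. 0 < \<alpha> Sm \<longrightarrow> (\<forall>Sk\<in>SS. \<eta> \<bullet> (D *v Sk) \<le> \<eta> \<bullet> (D *v Sm)))"
    using a0 a1 chE by (intro exI[of _ \<alpha>]) (simp add: \<eta>_def r_def)
  have ePsi: "\<eta> \<in> Psi rho SS" unfolding Psi_def using a0 a1 by (auto simp: \<eta>_def r_def)
  have kk: "\<eta> \<bullet> (D *v \<eta>) + (\<Sum>q\<in>UNIV. D$q$q * (y$q - \<eta>$q)^2) \<le> y \<bullet> (D *v y)" if "y \<in> Psi rho SS" for y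
    by (rule kkt_D[OF fin Snn diag chEx that])
  have dist0: "(\<Sum>q\<in>UNIV. D$q$q * (y$q - z$q)^2) \<ge> 0" for y z :: "real^'q"
    using dpos by (intro sum_nonneg) (simp add: less_imp_le)
  have enz: "\<eta> \<noteq> 0"
  proof
    assume "\<eta> = 0"
    then have "\<forall>q. rho$q \<le> r$q"
    proof (intro allI)
      fix q assume "\<eta> = 0"
      then have "max 0 (rho$q - r$q) = 0" using eq[of q] by simp
      then show "rho$q \<le> r$q" by (simp add: max_def split: if_splits)
    qed
    then have "rho \<in> stab_region SS" unfolding stab_region_def using a0 a1 rpos
      by (auto intro!: exI[of _ \<alpha>] simp: r_def less_imp_le)
    then show False using ovl by simp
  qed
  show ?thesis
  proof (intro exI[of _ \<eta>] conjI allI impI)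
    show "\<eta> \<noteq> 0" by (rule enz)
  next
    fix A S assume "arrival_trace A rho \<and> maxweight SS D A S"
    then show "(\<lambda>t. (1 / real t) *\<^sub>R workload A S t) \<longlonglongrightarrow> \<eta>"
      using conv[OF fin Snn diag _ _ a0 a1 r_def \<eta>_def var] by blast
  next
    show "\<eta> \<in> Psi rho SS" by (rule ePsi)
  next
    show "\<forall>\<eta>'\<in>Psi rho SS. \<eta> \<bullet> (D *v \<eta>) \<le> \<eta>' \<bullet> (D *v \<eta>')"
    proof
      fix y assume y: "y \<in> Psi rho SS"
      show "\<eta> \<bullet> (D *v \<eta>) \<le> y \<bullet> (D *v y)" using kk[OF y] dist0[of y \<eta>] by linarith
    qed
  next
    fix \<zeta> assume z: "\<zeta> \<in> Psi rho SS \<and> (\<forall>\<eta>'\<in>Psi rho SS. \<zeta> \<bullet> (D *v \<zeta>) \<le> \<eta>' \<bullet> (D *v \<eta>'))"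
    then have "\<eta> \<bullet> (D *v \<eta>) + (\<Sum>q\<in>UNIV. D$q$q * (\<zeta>$q - \<eta>$q)^2) \<le> \<zeta> \<bullet> (D *v \<zeta>)"
      "\<zeta> \<bullet> (D *v \<zeta>) \<le> \<eta> \<bullet> (D *v \<eta>)" using kk ePsi by auto
    then have "(\<Sum>q\<in>UNIV. D$q$q * (\<zeta>$q - \<eta>$q)^2) \<le> 0" by linarith
    then show "\<zeta> = \<eta>" by (rule eq_of_dist0[OF diag])
  next
    fix \<zeta>
    show "(\<exists>\<alpha>. (\<forall>S\<in>SS. 0 \<le> \<alpha> S) \<and> (\<Sum>S\<in>SS. \<alpha> S) = 1
              \<and> \<zeta> = pos_part (rho - (\<Sum>S\<in>SS. \<alpha> S *\<^sub>R S))
              \<and> (\<forall>Sm\<in>SS. 0 < \<alpha> Sm \<longrightarrow> (\<forall>Sk\<in>SS. \<zeta> \<bullet> (D *v Sk) \<le> \<zeta> \<bullet> (D *v Sm))))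
          \<longleftrightarrow> \<zeta> = \<eta>"
    proof
      assume ch: "\<exists>\<alpha>. (\<forall>S\<in>SS. 0 \<le> \<alpha> S) \<and> (\<Sum>S\<in>SS. \<alpha> S) = 1
              \<and> \<zeta> = pos_part (rho - (\<Sum>S\<in>SS. \<alpha> S *\<^sub>R S))
              \<and> (\<forall>Sm\<in>SS. 0 < \<alpha> Sm \<longrightarrow> (\<forall>Sk\<in>SS. \<zeta> \<bullet> (D *v Sk) \<le> \<zeta> \<bullet> (D *v Sm)))"
      have zPsi: "\<zeta> \<in> Psi rho SS" using ch unfolding Psi_def by fastforce
      have "\<zeta> \<bullet> (D *v \<zeta>) + (\<Sum>q\<in>UNIV. D$q$q * (\<eta>$q - \<zeta>$q)^2) \<le> \<eta> \<bullet> (D *v \<eta>)"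
        by (rule kkt_D[OF fin Snn diag ch ePsi])
      moreover have "\<eta> \<bullet> (D *v \<eta>) \<le> \<zeta> \<bullet> (D *v \<zeta>)" using kk[OF zPsi] dist0[of \<zeta> \<eta>] by linarith
      ultimately have "(\<Sum>q\<in>UNIV. D$q$q * (\<eta>$q - \<zeta>$q)^2) \<le> 0" by linarith
      then show "\<zeta> = \<eta>" by (rule eq_of_dist0[OF diag, symmetric])
    next
      assume "\<zeta> = \<eta>"
      then show "\<exists>\<alpha>. (\<forall>S\<in>SS. 0 \<le> \<alpha> S) \<and> (\<Sum>S\<in>SS. \<alpha> S) = 1
              \<and> \<zeta> = pos_part (rho - (\<Sum>S\<in>SS. \<alpha> S *\<^sub>R S))
              \<and> (\<forall>Sm\<in>SS. 0 < \<alpha> Sm \<longrightarrow> (\<forall>Sk\<in>SS. \<zeta> \<bullet> (D *v Sk) \<le> \<zeta> \<bullet> (D *v Sm)))"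
        using chEx by simp
    qed
  qed
qed


end
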